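(* Let $A,B,C,D$ be real random variables on a common probability space with finite second moments, $\mathrm{Var}(B)>0$, $\mathrm{Var}(D)>0$, $|\mathrm{Corr}(B,D)|<1$, $\mathbb{E}[A]\neq0$, $\mathbb{E}[C]\neq 0$, and set $R=\mathbb{E}[A]/\mathbb{E}[C]$. Let $n\ge1$ and let $(A_i,B_i,C_i,D_i)_{i=1,\dots,n}$ be i.i.d. copies of $(A,B,C,D)$. For $\alpha,\beta\in\mathbb{R}$ put $N_\alpha=\overline{A_n}+\alpha(\mathbb{E}[B]-\overline{B_n})$ and $M_\beta=\overline{C_n}+\beta(\mathbb{E}[D]-\overline{D_n})$. Then the function $(\alpha,\beta)\mapsto\Phi(N_\alpha,M_\beta)$ on $\mathbb{R}^2$ has a unique minimizer $(\alpha_o,\beta_o)$, given by $$\alpha_o=\frac{\mathrm{Var}(D)\mathrm{Cov}(A,B)-R\,\mathrm{Var}(D)\mathrm{Cov}(B,C)+R\,\mathrm{Cov}(B,D)\mathrm{Cov}(C,D)-\mathrm{Cov}(B,D)\mathrm{Cov}(A,D)}{\mathrm{Var}(B)\mathrm{Var}(D)-\mathrm{Cov}(B,D)^2},$$ $$\beta_o=\frac{\mathrm{Cov}(B,D)\mathrm{Cov}(A,B)-R\,\mathrm{Cov}(B,D)\mathrm{Cov}(B,C)+R\,\mathrm{Var}(B)\mathrm{Cov}(C,D)-\mathrm{Var}(B)\mathrm{Cov}(A,D)}{R\big(\mathrm{Var}(B)\mathrm{Var}(D)-\mathrm{Cov}(B,D)^2\big)},$$ and in particular $\Phi(N_{\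alpha_o},M_{\beta_o})\le\Phi(\overline{A_n},\overline{C_n})$.
   Context: For a random variable $X$, $\overline{X_n}=\frac1n\sum_{i=1}^n X_i$ denotes the sample mean of the i.i.d. copies $X_1,\dots,X_n$. For real random variables $X,Z$ with finite second moments and $\mathbb{E}[Z]\neq0$, define the first-order (delta-method) approximation of the variance of the ratio $X/Z$: $$\Phi(X,Z)=\frac{\mathrm{Var}(X)}{\mathbb{E}[Z]^2}+\frac{\mathbb{E}[X]^2}{\mathbb{E}[Z]^4}\mathrm{Var}(Z)-2\frac{\mathbb{E}[X]}{\mathbb{E}[Z]^3}\mathrm{Cov}(X,Z).$$ $\Phi(N_\alpha,M_\beta)$ is the paper's variance of the CV/CV ratio estimator $N_\alpha/M_\beta$ of $R$, and $\Phi(\overline{A_n},\overline{C_n})=\Phi(N_0,M_0)$ is that of the Monte Carlo ratio estimator $\overline{A_n}/\overline{C_n}$; $\mathbb{E}[B],\mathbb{E}[D]$ are known constants. $\mathrm{Corr}(B,D)=\mathrm{Cov}(B,D)/\sqrt{\mathrm{Var}(B)\mathrm{Var}(D)}$. *)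

theory Defs
  imports "HOL-Probability.Probability"
begin

definition expect :: "'a measure \<Rightarrow> ('a \<Rightarrow> real) \<Rightarrow> real" where
  "expect M X = (\<integral>\<omega>. X \<omega> \<partial>M)"

definition cov :: "'a measure \<Rightarrow> ('a \<Rightarrow> real) \<Rightarrow> ('a \<Rightarrow> real) \<Rightarrow> real" where
  "cov M X Y = (\<integral>\<omega>. (X \<omega> - expect M X) * (Y \<omega> - expect M Y) \<partial>M)"

definition var :: "'a measure \<Rightarrow> ('a \<Rightarrow> real) \<Rightarrow> real" where
  "var M X = (\<integral>\<omega>. (X \<omega> - expect M X)^2 \<partial>M)"

definition corr :: "'a measure \<Rightarrow> ('a \<Rightarrow> real) \<Rightarrow> ('a \<Rightarrow> real) \<Rightarrow> real" where
  "corr M X Y = cov M X Y / sqrt (var M X * var M Y)"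

text \<open>First-order (delta-method) approximation of the variance of X/Z.\<close>
definition Phi :: "'a measure \<Rightarrow> ('a \<Rightarrow> real) \<Rightarrow> ('a \<Rightarrow> real) \<Rightarrow> real" where
  "Phi M X Z = var M X / (expect M Z)^2
              + (expect M X)^2 / (expect M Z)^4 * var M Z
              - 2 * expect M X / (expect M Z)^3 * cov M X Z"

definition smean :: "nat \<Rightarrow> (nat \<Rightarrow> 'a \<Rightarrow> real) \<Rightarrow> 'a \<Rightarrow> real" where
  "smean n X \<omega> = (\<Sum>i<n. X i \<omega>) / real n"

end

theory Submission
  imports Defs
begin

definition sqint :: "'a measure \<Rightarrow> ('a \<Rightarrow> real) \<Rightarrow> bool" where
  "sqint M X \<longleftrightarrow> X \<in> borel_measurable M \<and> integrable M (\<lambda>\<omega>. (X \<omega>)^2)"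

lemma sqint_prod:
  assumes "sqint M X" "sqint M Y"
  shows "integrable M (\<lambda>\<omega>. X \<omega> * Y \<omega>)"
proof (rule Bochner_Integration.integrable_bound)
  show "integrable M (\<lambda>\<omega>. (X \<omega>)^2 + (Y \<omega>)^2)"
    using assms unfolding sqint_def by auto
  show "(\<lambda>\<omega>. X \<omega> * Y \<omega>) \<in> borel_measurable M"
    using assms unfolding sqint_def by auto
  show "AE x in M. norm (X x * Y x) \<le> norm ((X x)^2 + (Y x)^2)"
  proof (rule AE_I2)
    fix x
    have key: "\<bar>a * b\<bar> \<le> a^2 + b^2" for a b :: real
    proof -
      have 1: "0 \<le> (\<bar>a\<bar> - \<bar>b\<bar>)^2" by simp
      have 2: "(\<bar>a\<bar> - \<bar>b\<bar>)^2 = a^2 + b^2 - 2*(\<bar>a\<bar>*\<bar>b\<bar>)"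
        by (simp add: power2_eq_square algebra_simps)
      have 3: "0 \<le> \<bar>a\<bar>*\<bar>b\<bar>" by simp
      show ?thesis unfolding abs_mult using 1 2 3 by linarith
    qed
    have "\<bar>X x * Y x\<bar> \<le> (X x)^2 + (Y x)^2" by (rule key)
    then show "norm (X x * Y x) \<le> norm ((X x)^2 + (Y x)^2)" by simp
  qed
qed

lemma sqint_int:
  assumes "prob_space M" "sqint M X"
  shows "integrable M X"
proof -
  interpret prob_space M by fact
  have m: "X \<in> borel_measurable M" and i: "integrable M (\<lambda>x. (X x)^2)"
    using assms(2) unfolding sqint_def by auto
  show ?thesis by (rule square_integrable_imp_integrable[OF m i])
qed

lemma sqint_lin:
  assumes P: "prob_space M" and I: "finite I" and X: "\<And>k. k \<in> I \<Longrightarrow> sqint M (X k)"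
  shows "sqint M (\<lambda>\<omega>. (\<Sum>k\<in>I. w k * X k \<omega>) + c)"
proof -
  interpret prob_space M by fact
  have m: "\<And>k. k \<in> I \<Longrightarrow> X k \<in> borel_measurable M" using X unfolding sqint_def by auto
  have eq: "(\<lambda>\<omega>. ((\<Sum>k\<in>I. w k * X k \<omega>) + c)^2) =
     (\<lambda>\<omega>. (\<Sum>k\<in>I. \<Sum>l\<in>I. (w k * w l) * (X k \<omega> * X l \<omega>)) + (\<Sum>k\<in>I. (2*c*w k) * X k \<omega>) + c^2)"
  proof (rule ext)
    fix \<omega>
    have sq: "(s + c)^2 = s * s + 2 * c * s + c^2" for s :: real
      by (simp add: power2_eq_square algebra_simps)
    have a1: "(\<Sum>k\<in>I. w k * X k \<omega>) * (\<Sum>k\<in>I. w k * X k \<omega>) = (\<Sum>k\<in>I. \<Sum>l\<in>I. (w k * w l) * (X k \<omega> * X l \<omega>))"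
      by (simp only: sum_product, intro sum.cong refl) (simp add: ac_simps)
    have a2: "2 * c * (\<Sum>k\<in>I. w k * X k \<omega>) = (\<Sum>k\<in>I. (2*c*w k) * X k \<omega>)"
      by (simp only: sum_distrib_left, intro sum.cong refl) (simp add: ac_simps)
    show "((\<Sum>k\<in>I. w k * X k \<omega>) + c)^2 =
     (\<Sum>k\<in>I. \<Sum>l\<in>I. (w k * w l) * (X k \<omega> * X l \<omega>)) + (\<Sum>k\<in>I. (2*c*w k) * X k \<omega>) + c^2"
      unfolding sq a1 a2 ..
  qed
  have "integrable M (\<lambda>\<omega>. (\<Sum>k\<in>I. \<Sum>l\<in>I. (w k * w l) * (X k \<omega> * X l \<omega>)) + (\<Sum>k\<in>I. (2*c*w k) * X k \<omega>) + c^2)"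
    using X sqint_prod[OF X X] sqint_int[OF P]
    by (intro Bochner_Integration.integrable_add integrable_sum integrable_mult_right) auto
  moreover have "(\<lambda>\<omega>. (\<Sum>k\<in>I. w k * X k \<omega>) + c) \<in> borel_measurable M"
    using m by (intro borel_measurable_add borel_measurable_sum borel_measurable_times) auto
  ultimately show ?thesis unfolding sqint_def eq by simp
qed

lemma expect_lin:
  assumes P: "prob_space M" and I: "finite I" and X: "\<And>k. k \<in> I \<Longrightarrow> integrable M (X k)"
  shows "expect M (\<lambda>\<omega>. (\<Sum>k\<in>I. w k * X k \<omega>) + c) = (\<Sum>k\<in>I. w k * expect M (X k)) + c"
proof -
  interpret prob_space M by fact
  have i1: "integrable M (\<lambda>\<omega>. \<Sum>k\<in>I. w k * X k \<omega>)"
    by (intro Bochner_Integration.integrable_sum integrable_mult_right) (use X in auto)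
  have "(\<integral>\<omega>. (\<Sum>k\<in>I. w k * X k \<omega>) + c \<partial>M) = (\<integral>\<omega>. (\<Sum>k\<in>I. w k * X k \<omega>) \<partial>M) + (\<integral>\<omega>. c \<partial>M)"
    by (rule Bochner_Integration.integral_add[OF i1]) simp
  also have "(\<integral>\<omega>. (\<Sum>k\<in>I. w k * X k \<omega>) \<partial>M) = (\<Sum>k\<in>I. (\<integral>\<omega>. w k * X k \<omega> \<partial>M))"
    by (rule Bochner_Integration.integral_sum) (use X in auto)
  also have "\<dots> = (\<Sum>k\<in>I. w k * (\<integral>\<omega>. X k \<omega> \<partial>M))"
    by (rule sum.cong) (simp_all only: integral_mult_right_zero)
  also have "(\<integral>\<omega>. c \<partial>M) = c" by (simp add: prob_space)
  finally show ?thesis unfolding expect_def .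
qed

lemma cov_sym: "cov M X Y = cov M Y X"
  unfolding cov_def by (simp add: mult.commute)

lemma cov_self: "cov M X X = var M X"
  unfolding cov_def var_def by (simp add: power2_eq_square)

lemma var_lin:
  assumes P: "prob_space M" and I: "finite I" and X: "\<And>k. k \<in> I \<Longrightarrow> sqint M (X k)"
  shows "var M (\<lambda>\<omega>. (\<Sum>k\<in>I. w k * X k \<omega>) + c) = (\<Sum>k\<in>I. \<Sum>l\<in>I. w k * w l * cov M (X k) (X l))"
proof -
  interpret prob_space M by fact
  have iX: "\<And>k. k \<in> I \<Longrightarrow> integrable M (X k)" using X sqint_int[OF P] by auto
  have E: "expect M (\<lambda>\<omega>. (\<Sum>k\<in>I. w k * X k \<omega>) + c) = (\<Sum>k\<in>I. w k * expect M (X k)) + c"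
    by (rule expect_lin[OF P I iX])
  have eq: "\<And>\<omega>. ((\<Sum>k\<in>I. w k * X k \<omega>) + c - ((\<Sum>k\<in>I. w k * expect M (X k)) + c))^2
      = (\<Sum>k\<in>I. \<Sum>l\<in>I. w k * w l * ((X k \<omega> - expect M (X k)) * (X l \<omega> - expect M (X l))))"
  proof -
    fix \<omega>
    have "(\<Sum>k\<in>I. w k * X k \<omega>) + c - ((\<Sum>k\<in>I. w k * expect M (X k)) + c)
        = (\<Sum>k\<in>I. w k * (X k \<omega> - expect M (X k)))"
      by (simp add: right_diff_distrib sum_subtractf)
    then show "?thesis \<omega>"
      unfolding power2_eq_square by (simp only: sum_product, intro sum.cong refl) (simp add: ac_simps)
  qed
  have cint: "\<And>k l. k \<in> I \<Longrightarrow> l \<in> I \<Longrightarrow>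
     integrable M (\<lambda>\<omega>. (X k \<omega> - expect M (X k)) * (X l \<omega> - expect M (X l)))"
  proof -
    fix k l assume "k \<in> I" "l \<in> I"
    have "(\<lambda>\<omega>. (X k \<omega> - expect M (X k)) * (X l \<omega> - expect M (X l))) =
       (\<lambda>\<omega>. X k \<omega> * X l \<omega> - expect M (X l) * X k \<omega> - expect M (X k) * X l \<omega> + expect M (X k) * expect M (X l))"
      by (rule ext) (simp add: algebra_simps)
    moreover have "integrable M (\<lambda>\<omega>. X k \<omega> * X l \<omega> - expect M (X l) * X k \<omega> - expect M (X k) * X l \<omega> + expect M (X k) * expect M (X l))"
      using \<open>k \<in> I\<close> \<open>l \<in> I\<close> X iX sqint_prod[OF X X]
      by (intro Bochner_Integration.integrable_add Bochner_Integration.integrable_diff integrable_mult_right) auto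
    ultimately show "?thesis k l" by simp
  qed
  have "var M (\<lambda>\<omega>. (\<Sum>k\<in>I. w k * X k \<omega>) + c) = (\<integral>\<omega>. (\<Sum>k\<in>I. \<Sum>l\<in>I. w k * w l * ((X k \<omega> - expect M (X k)) * (X l \<omega> - expect M (X l)))) \<partial>M)"
    unfolding var_def E by (simp only: eq)
  also have "\<dots> = (\<Sum>k\<in>I. (\<integral>\<omega>. (\<Sum>l\<in>I. w k * w l * ((X k \<omega> - expect M (X k)) * (X l \<omega> - expect M (X l)))) \<partial>M))"
    by (rule Bochner_Integration.integral_sum) (use cint in \<open>auto intro!: integrable_sum integrable_mult_right\<close>)
  also have "\<dots> = (\<Sum>k\<in>I. \<Sum>l\<in>I. (\<integral>\<omega>. w k * w l * ((X k \<omega> - expect M (X k)) * (X l \<omega> - expect M (X l))) \<partial>M))"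
    by (intro sum.cong refl Bochner_Integration.integral_sum) (use cint in \<open>auto intro!: integrable_mult_right\<close>)
  also have "\<dots> = (\<Sum>k\<in>I. \<Sum>l\<in>I. w k * w l * cov M (X k) (X l))"
    unfolding cov_def expect_def by (simp only: integral_mult_right_zero)
  finally show ?thesis .
qed

lemma smean_lemma:
  fixes g :: "'b \<Rightarrow> real"
  assumes P: "prob_space M"
   and T: "T \<in> measurable M S" and Ts: "\<And>i. i < n \<Longrightarrow> Ts i \<in> measurable M S"
   and dist: "\<And>i. i < n \<Longrightarrow> distr M S (Ts i) = distr M S T"
   and ind: "prob_space.indep_vars M (\<lambda>_. S) Ts {..<n}"
   and g: "g \<in> borel_measurable S" and sq: "sqint M (\<lambda>\<omega>. g (T \<omega>))" and n: "n \<ge> 1"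
  shows "sqint M (\<lambda>\<omega>. (\<Sum>i<n. (1/real n) * g (Ts i \<omega>)) + c)"
   and "expect M (\<lambda>\<omega>. (\<Sum>i<n. (1/real n) * g (Ts i \<omega>)) + c) = expect M (\<lambda>\<omega>. g (T \<omega>)) + c"
   and "var M (\<lambda>\<omega>. (\<Sum>i<n. (1/real n) * g (Ts i \<omega>)) + c) = var M (\<lambda>\<omega>. g (T \<omega>)) / real n"
proof -
  interpret prob_space M by fact
  have tr_int: "integrable M (\<lambda>\<omega>. f (Ts i \<omega>)) = integrable M (\<lambda>\<omega>. f (T \<omega>))"
    if "i < n" "f \<in> borel_measurable S" for i and f :: "'b \<Rightarrow> real"
    using integrable_distr_eq[OF Ts[OF \<open>i < n\<close>] that(2)] integrable_distr_eq[OF T that(2)] dist[OF \<open>i < n\<close>]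
    by simp
  have tr_integral: "(\<integral>\<omega>. f (Ts i \<omega>) \<partial>M) = (\<integral>\<omega>. f (T \<omega>) \<partial>M)"
    if "i < n" "f \<in> borel_measurable S" for i and f :: "'b \<Rightarrow> real"
    using integral_distr[OF Ts[OF \<open>i < n\<close>] that(2)] integral_distr[OF T that(2)] dist[OF \<open>i < n\<close>]
    by simp
  define X where "X i = (\<lambda>\<omega>. g (Ts i \<omega>))" for i
  define m where "m = expect M (\<lambda>\<omega>. g (T \<omega>))"
  define v where "v = var M (\<lambda>\<omega>. g (T \<omega>))"
  have g2: "(\<lambda>x. (g x)^2) \<in> borel_measurable S" using g by measurable
  have sqX: "sqint M (X i)" if "i < n" for i
    unfolding sqint_def X_def
  proof
    show "(\<lambda>\<omega>. g (Ts i \<omega>)) \<in> borel_measurable M"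
      using measurable_compose[OF Ts[OF that] g] by (simp add: comp_def)
    show "integrable M (\<lambda>\<omega>. (g (Ts i \<omega>))^2)"
      using tr_int[OF that g2] sq unfolding sqint_def by simp
  qed
  have iX: "integrable M (X i)" if "i < n" for i using sqint_int[OF P sqX[OF that]] .
  have EX: "expect M (X i) = m" if "i < n" for i
    unfolding X_def m_def expect_def using tr_integral[OF that g] .
  have VX: "var M (X i) = v" if "i < n" for i
  proof -
    have gm: "(\<lambda>x. (g x - m)^2) \<in> borel_measurable S" using g by measurable
    show ?thesis
      unfolding var_def EX[OF that] unfolding X_def v_def var_def m_def[symmetric]
      using tr_integral[OF that gm] .
  qed
  have CX: "cov M (X i) (X j) = 0" if "i < n" "j < n" "i \<noteq> j" for i j
  proof -
    have ind2: "indep_vars (\<lambda>_. borel) (\<lambda>k \<omega>. g (Ts k \<omega>) - m) {..<n}"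
      using indep_vars_compose2[OF ind, where Y="\<lambda>k x. g x - m" and N="\<lambda>_. borel"] g
      by simp
    have ind3: "indep_vars (\<lambda>_. borel) (\<lambda>k \<omega>. g (Ts k \<omega>) - m) {i, j}"
      by (rule indep_vars_subset[OF ind2]) (use that in auto)
    have iZ: "integrable M (\<lambda>\<omega>. g (Ts k \<omega>) - m)" if "k \<in> {i, j}" for k
      using iX[of k] that \<open>i < n\<close> \<open>j < n\<close> unfolding X_def by auto
    have "(\<integral>\<omega>. (\<Prod>k\<in>{i,j}. g (Ts k \<omega>) - m) \<partial>M) = (\<Prod>k\<in>{i,j}. (\<integral>\<omega>. g (Ts k \<omega>) - m \<partial>M))"
      by (rule indep_vars_lebesgue_integral[OF _ ind3 iZ]) auto
    moreover have "(\<integral>\<omega>. g (Ts i \<omega>) - m \<partial>M) = 0"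
      using iX[OF \<open>i < n\<close>] EX[OF \<open>i < n\<close>] unfolding X_def expect_def
      by (simp add: prob_space)
    ultimately have "(\<integral>\<omega>. (g (Ts i \<omega>) - m) * (g (Ts j \<omega>) - m) \<partial>M) = 0"
      using \<open>i \<noteq> j\<close> by simp
    then show ?thesis
      unfolding cov_def EX[OF \<open>i < n\<close>] EX[OF \<open>j < n\<close>] unfolding X_def .
  qed
  have sum_eq: "(\<Sum>i<n. (1/real n) * g (Ts i \<omega>)) = (\<Sum>i<n. (1/real n) * X i \<omega>)" for \<omega>
    unfolding X_def ..
  show "sqint M (\<lambda>\<omega>. (\<Sum>i<n. (1/real n) * g (Ts i \<omega>)) + c)"
    unfolding sum_eq by (rule sqint_lin[OF P]) (use sqX in auto)
  have nz: "real n \<noteq> 0" using n by simp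
  show "expect M (\<lambda>\<omega>. (\<Sum>i<n. (1/real n) * g (Ts i \<omega>)) + c) = expect M (\<lambda>\<omega>. g (T \<omega>)) + c"
  proof -
    have "expect M (\<lambda>\<omega>. (\<Sum>i<n. (1/real n) * X i \<omega>) + c) = (\<Sum>i<n. (1/real n) * expect M (X i)) + c"
      by (rule expect_lin[OF P]) (use iX in auto)
    also have "\<dots> = (\<Sum>i<n. (1/real n) * m) + c"
      by (simp add: EX)
    also have "\<dots> = m + c" using nz by simp
    finally show ?thesis by (simp only: sum_eq m_def)
  qed
  have inner: "(\<Sum>j<n. 1 / real n * (1 / real n) * cov M (X i) (X j)) = 1 / real n * (1 / real n) * v"
    if "i < n" for i
  proof -
    have "(\<Sum>j<n. 1 / real n * (1 / real n) * cov M (X i) (X j)) =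
          (\<Sum>j<n. if j = i then 1 / real n * (1 / real n) * v else 0)"
      by (rule sum.cong) (use CX VX that in \<open>auto simp: cov_self\<close>)
    also have "\<dots> = 1 / real n * (1 / real n) * v" using that by simp
    finally show ?thesis .
  qed
  show "var M (\<lambda>\<omega>. (\<Sum>i<n. (1/real n) * g (Ts i \<omega>)) + c) = var M (\<lambda>\<omega>. g (T \<omega>)) / real n"
  proof -
    have "var M (\<lambda>\<omega>. (\<Sum>i<n. (1/real n) * X i \<omega>) + c) = (\<Sum>i<n. \<Sum>j<n. 1 / real n * (1 / real n) * cov M (X i) (X j))"
      by (rule var_lin[OF P]) (use sqX in auto)
    also have "\<dots> = (\<Sum>i<n. 1 / real n * (1 / real n) * v)"
      by (rule sum.cong) (use inner in auto)
    also have "\<dots> = v / real n" using nz by simp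
    finally show ?thesis by (simp only: sum_eq v_def)
  qed
qed

lemma quad_pos:
  fixes vB vD s u w :: real
  assumes "vB > 0" "s^2 < vB * vD"
  shows "vB * u^2 - 2 * s * u * w + vD * w^2 \<ge> 0"
    and "vB * u^2 - 2 * s * u * w + vD * w^2 = 0 \<Longrightarrow> u = 0 \<and> w = 0"
proof -
  have id: "vB * (vB * u^2 - 2 * s * u * w + vD * w^2) = (vB * u - s * w)^2 + (vB * vD - s^2) * w^2"
    by (simp add: algebra_simps power2_eq_square)
  have "(vB * u - s * w)^2 + (vB * vD - s^2) * w^2 \<ge> 0"
    using assms by (intro add_nonneg_nonneg) auto
  then show "vB * u^2 - 2 * s * u * w + vD * w^2 \<ge> 0"
    using assms(1) id by (metis zero_le_mult_iff not_less)
  assume "vB * u^2 - 2 * s * u * w + vD * w^2 = 0"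
  then have z: "(vB * u - s * w)^2 + (vB * vD - s^2) * w^2 = 0" using id by simp
  have a: "(vB * u - s * w)^2 \<ge> 0" by simp
  have b: "(vB * vD - s^2) * w^2 \<ge> 0" using assms by simp
  have "(vB * vD - s^2) * w^2 = 0" using z a b by linarith
  then have w: "w = 0" using assms by simp
  then have "(vB * u)^2 = 0" using z a b by simp
  then have "u = 0" using assms by simp
  with w show "u = 0 \<and> w = 0" by simp
qed

lemma alg_main:
  fixes vA vB vC vD cAB cAC cAD cBC cBD cCD R K :: real
  assumes vB: "vB > 0" and vD: "vD > 0" and sd: "cBD^2 < vB * vD" and R: "R \<noteq> 0" and K: "K > 0"
  and F_eq: "\<And>x y. F x y = (vA + x^2 * vB + R^2 * vC + y^2 * vD - 2*x*cAB - 2*R*cAC + 2*y*cAD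
                      + 2*x*R*cBC - 2*x*y*cBD - 2*R*y*cCD) / K"
  defines "ao \<equiv> (vD * cAB - R * vD * cBC + R * cBD * cCD - cBD * cAD) / (vB * vD - cBD^2)"
  defines "bo \<equiv> (cBD * cAB - R * cBD * cBC + R * vB * cCD - vB * cAD) / (R * (vB * vD - cBD^2))"
  shows "{p :: real \<times> real. \<forall>q :: real \<times> real. F (fst p) (R * snd p) \<le> F (fst q) (R * snd q)} = {(ao, bo)}
         \<and> F ao (R * bo) \<le> F 0 0"
proof -
  define det where "det = vB * vD - cBD^2"
  have det: "det > 0" using sd unfolding det_def by simp
  define P1 where "P1 = cAB - R * cBC"
  define P2 where "P2 = cAD - R * cCD"
  define go where "go = R * bo"
  have ao': "ao = (vD * P1 - cBD * P2) / det" unfolding ao_def P1_def P2_def det_def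
    by (simp add: algebra_simps)
  have go': "go = (cBD * P1 - vB * P2) / det" unfolding go_def bo_def P1_def P2_def det_def
    using R det unfolding det_def by (simp add: field_simps)
  have n1: "vB * (vD * P1 - cBD * P2) - cBD * (cBD * P1 - vB * P2) = det * P1"
    unfolding det_def by (simp add: algebra_simps power2_eq_square)
  have n2: "vD * (cBD * P1 - vB * P2) - cBD * (vD * P1 - cBD * P2) = det * (- P2)"
    unfolding det_def by (simp add: algebra_simps power2_eq_square)
  have e1: "vB * ao - cBD * go = P1"
  proof -
    have "vB * ao - cBD * go = (vB * (vD * P1 - cBD * P2) - cBD * (cBD * P1 - vB * P2)) / det"
      unfolding ao' go' using det by (simp add: field_simps)
    also have "\<dots> = P1" unfolding n1 using det by simp
    finally show ?thesis .
  qed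
  have e2: "vD * go - cBD * ao = - P2"
  proof -
    have "vD * go - cBD * ao = (vD * (cBD * P1 - vB * P2) - cBD * (vD * P1 - cBD * P2)) / det"
      unfolding ao' go' using det by (simp add: field_simps)
    also have "\<dots> = - P2" unfolding n2 using det by simp
    finally show ?thesis .
  qed
  have key: "F x y - F ao go = (vB * (x - ao)^2 - 2 * cBD * (x - ao) * (y - go) + vD * (y - go)^2) / K" for x y
  proof -
    have "K * (F x y - F ao go) = vB * (x - ao)^2 - 2 * cBD * (x - ao) * (y - go) + vD * (y - go)^2
         + 2 * (x - ao) * (vB * ao - cBD * go - P1) + 2 * (y - go) * (vD * go - cBD * ao + P2)"
      unfolding F_eq P1_def P2_def using K
      by (simp add: field_simps power2_eq_square)
    then have "K * (F x y - F ao go) = vB * (x - ao)^2 - 2 * cBD * (x - ao) * (y - go) + vD * (y - go)^2"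
      using e1 e2 by simp
    then show ?thesis using K by (simp add: field_simps)
  qed
  have ge: "F ao go \<le> F x y" for x y
  proof -
    have "vB * (x - ao)^2 - 2 * cBD * (x - ao) * (y - go) + vD * (y - go)^2 \<ge> 0"
      by (rule quad_pos(1)[OF vB sd])
    then have "(vB * (x - ao)^2 - 2 * cBD * (x - ao) * (y - go) + vD * (y - go)^2) / K \<ge> 0"
      using K by (intro divide_nonneg_pos)
    then show ?thesis using key[of x y] by linarith
  qed
  have uniq: "x = ao \<and> y = go" if "F x y \<le> F ao go" for x y
  proof -
    have q0: "vB * (x - ao)^2 - 2 * cBD * (x - ao) * (y - go) + vD * (y - go)^2 \<ge> 0"
      by (rule quad_pos(1)[OF vB sd])
    have "(vB * (x - ao)^2 - 2 * cBD * (x - ao) * (y - go) + vD * (y - go)^2) / K \<le> 0"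
      using key[of x y] that by linarith
    then have "vB * (x - ao)^2 - 2 * cBD * (x - ao) * (y - go) + vD * (y - go)^2 \<le> 0"
      using K by (simp add: divide_le_0_iff)
    then have "vB * (x - ao)^2 - 2 * cBD * (x - ao) * (y - go) + vD * (y - go)^2 = 0" using q0 by simp
    from quad_pos(2)[OF vB sd this] show ?thesis by simp
  qed
  show ?thesis
  proof
    show "{p :: real \<times> real. \<forall>q :: real \<times> real. F (fst p) (R * snd p) \<le> F (fst q) (R * snd q)} = {(ao, bo)}"
    proof (intro set_eqI iffI)
      fix p :: "real \<times> real"
      assume "p \<in> {p. \<forall>q. F (fst p) (R * snd p) \<le> F (fst q) (R * snd q)}"
      then have "\<forall>q. F (fst p) (R * snd p) \<le> F (fst q) (R * snd q)" by simp
      then have "F (fst p) (R * snd p) \<le> F (fst (ao, bo)) (R * snd (ao, bo))" by (rule spec)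
      then have "F (fst p) (R * snd p) \<le> F ao go" unfolding go_def by simp
      from uniq[OF this] have "fst p = ao" "R * snd p = R * bo" unfolding go_def by auto
      then have "fst p = ao" "snd p = bo" using R by auto
      then show "p \<in> {(ao, bo)}" by (cases p) auto
    next
      fix p :: "real \<times> real"
      assume "p \<in> {(ao, bo)}"
      then show "p \<in> {p. \<forall>q. F (fst p) (R * snd p) \<le> F (fst q) (R * snd q)}"
        using ge unfolding go_def by auto
    qed
    show "F ao (R * bo) \<le> F 0 0" using ge[of 0 0] unfolding go_def .
  qed
qed

definition lin4 :: "real \<Rightarrow> real \<Rightarrow> real \<Rightarrow> real \<Rightarrow> real \<times> real \<times> real \<times> real \<Rightarrow> real" where
  "lin4 a b c d x = a * fst x + b * fst (snd x) + c * fst (snd (snd x)) + d * snd (snd (snd x))"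

lemma lin4_meas: "lin4 a b c d \<in> borel_measurable (borel \<Otimes>\<^sub>M borel \<Otimes>\<^sub>M borel \<Otimes>\<^sub>M borel)"
  unfolding lin4_def by measurable

lemma sum4: "(\<Sum>k\<in>{0,1,2,3::nat}. f k) = f 0 + f 1 + f 2 + f 3"
  by (simp add: numeral_eq_Suc add.assoc)

lemma sum2: "(\<Sum>k\<in>{0,1::nat}. f k) = f 0 + f 1"
  by simp

lemma lin4_stats:
  assumes P: "prob_space M" and sA: "sqint M A" and sB: "sqint M B" and sC: "sqint M C" and sD: "sqint M D"
  shows "sqint M (\<lambda>\<omega>. lin4 a b c d (A \<omega>, B \<omega>, C \<omega>, D \<omega>))"
    and "expect M (\<lambda>\<omega>. lin4 a b c d (A \<omega>, B \<omega>, C \<omega>, D \<omega>)) =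
         a * expect M A + b * expect M B + c * expect M C + d * expect M D"
    and "var M (\<lambda>\<omega>. lin4 a b c d (A \<omega>, B \<omega>, C \<omega>, D \<omega>)) =
         a*a * var M A + b*b * var M B + c*c * var M C + d*d * var M D
         + 2*a*b * cov M A B + 2*a*c * cov M A C + 2*a*d * cov M A D
         + 2*b*c * cov M B C + 2*b*d * cov M B D + 2*c*d * cov M C D"
proof -
  define X :: "nat \<Rightarrow> 'a \<Rightarrow> real" where "X k = (if k = 0 then A else if k = 1 then B else if k = 2 then C else D)" for k
  define w :: "nat \<Rightarrow> real" where "w k = (if k = 0 then a else if k = 1 then b else if k = 2 then c else d)" for k
  have X0: "X 0 = A" and X1: "X 1 = B" and X2: "X 2 = C" and X3: "X 3 = D" unfolding X_def by simp_all
  have w0: "w 0 = a" and w1: "w 1 = b" and w2: "w 2 = c" and w3: "w 3 = d" unfolding w_def by simp_all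
  have I: "finite {0,1,2,3::nat}" by simp
  have eq: "(\<lambda>\<omega>. lin4 a b c d (A \<omega>, B \<omega>, C \<omega>, D \<omega>)) = (\<lambda>\<omega>. (\<Sum>k\<in>{0,1,2,3::nat}. w k * X k \<omega>) + 0)"
    by (rule ext) (simp only: sum4 X0 X1 X2 X3 w0 w1 w2 w3 lin4_def fst_conv snd_conv add_0_right)
  have sX: "sqint M (X k)" if "k \<in> {0,1,2,3}" for k
    using that sA sB sC sD unfolding X_def by auto
  show "sqint M (\<lambda>\<omega>. lin4 a b c d (A \<omega>, B \<omega>, C \<omega>, D \<omega>))"
    unfolding eq by (rule sqint_lin[OF P I sX])
  have iX: "integrable M (X k)" if "k \<in> {0,1,2,3}" for k
    using sqint_int[OF P sX[OF that]] .
  show "expect M (\<lambda>\<omega>. lin4 a b c d (A \<omega>, B \<omega>, C \<omega>, D \<omega>)) =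
         a * expect M A + b * expect M B + c * expect M C + d * expect M D"
  proof -
    have "expect M (\<lambda>\<omega>. lin4 a b c d (A \<omega>, B \<omega>, C \<omega>, D \<omega>)) = expect M (\<lambda>\<omega>. (\<Sum>k\<in>{0,1,2,3::nat}. w k * X k \<omega>) + 0)"
      by (simp only: eq)
    also have "\<dots> = (\<Sum>k\<in>{0,1,2,3::nat}. w k * expect M (X k)) + 0"
      by (rule expect_lin[OF P I iX])
    also have "\<dots> = a * expect M A + b * expect M B + c * expect M C + d * expect M D"
      by (simp only: sum4 X0 X1 X2 X3 w0 w1 w2 w3 add_0_right)
    finally show ?thesis .
  qed
  have v: "var M (\<lambda>\<omega>. lin4 a b c d (A \<omega>, B \<omega>, C \<omega>, D \<omega>)) =
     (\<Sum>k\<in>{0,1,2,3::nat}. \<Sum>l\<in>{0,1,2,3::nat}. w k * w l * cov M (X k) (X l))"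
    unfolding eq by (rule var_lin[OF P I sX])
  show "var M (\<lambda>\<omega>. lin4 a b c d (A \<omega>, B \<omega>, C \<omega>, D \<omega>)) =
         a*a * var M A + b*b * var M B + c*c * var M C + d*d * var M D
         + 2*a*b * cov M A B + 2*a*c * cov M A C + 2*a*d * cov M A D
         + 2*b*c * cov M B C + 2*b*d * cov M B D + 2*c*d * cov M C D"
    unfolding v sum4 X0 X1 X2 X3 w0 w1 w2 w3 cov_self cov_sym[of M B A] cov_sym[of M C A] cov_sym[of M D A]
                  cov_sym[of M C B] cov_sym[of M D B] cov_sym[of M D C]
    by (simp add: algebra_simps)
qed

lemma var2:
  assumes P: "prob_space M" and sX: "sqint M X" and sZ: "sqint M Z"
  shows "var M (\<lambda>\<omega>. X \<omega> - r * Z \<omega>) = var M X + r^2 * var M Z - 2 * r * cov M X Z"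
proof -
  define Y :: "nat \<Rightarrow> 'a \<Rightarrow> real" where "Y k = (if k = 0 then X else Z)" for k
  define w :: "nat \<Rightarrow> real" where "w k = (if k = 0 then 1 else - r)" for k
  have I: "finite {0,1::nat}" by simp
  have eq: "(\<lambda>\<omega>. X \<omega> - r * Z \<omega>) = (\<lambda>\<omega>. (\<Sum>k\<in>{0,1::nat}. w k * Y k \<omega>) + 0)"
    by (rule ext) (simp add: w_def Y_def sum2)
  have sY: "sqint M (Y k)" if "k \<in> {0,1}" for k
    using that sX sZ unfolding Y_def by auto
  show ?thesis
  proof -
    have Y0: "Y 0 = X" and Y1: "Y 1 = Z" unfolding Y_def by simp_all
    have w0: "w 0 = 1" and w1: "w 1 = - r" unfolding w_def by simp_all
    have "var M (\<lambda>\<omega>. X \<omega> - r * Z \<omega>) = var M (\<lambda>\<omega>. (\<Sum>k\<in>{0,1::nat}. w k * Y k \<omega>) + 0)"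
      by (simp only: eq)
    also have "\<dots> = (\<Sum>k\<in>{0,1::nat}. \<Sum>l\<in>{0,1::nat}. w k * w l * cov M (Y k) (Y l))"
      by (rule var_lin[OF P I sY])
    also have "\<dots> = var M X + r^2 * var M Z - 2 * r * cov M X Z"
      unfolding sum2 Y0 Y1 w0 w1 cov_self cov_sym[of M Z X]
      by (simp add: power2_eq_square)
    finally show ?thesis .
  qed
qed

lemma phi_alg:
  fixes a c x z k :: real
  assumes "c \<noteq> 0"
  shows "x / c^2 + a^2 / c^4 * z - 2 * a / c^3 * k = (x + (a/c)^2 * z - 2 * (a/c) * k) / c^2"
proof -
  have "a^2 / c^4 * z = (a/c)^2 * z / c^2" using assms by (simp add: power_divide eval_nat_numeral field_simps)
  moreover have "2 * a / c^3 * k = 2 * (a/c) * k / c^2" using assms by (simp add: eval_nat_numeral field_simps)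
  ultimately show ?thesis by (simp add: add_divide_distrib diff_divide_distrib)
qed

theorem mainTheorem5:
  fixes M :: "'a measure"
    and A B C D :: "'a \<Rightarrow> real"
    and As Bs Cs Ds :: "nat \<Rightarrow> 'a \<Rightarrow> real"
    and n :: nat
  assumes "prob_space M"
    and meas: "A \<in> borel_measurable M" "B \<in> borel_measurable M"
              "C \<in> borel_measurable M" "D \<in> borel_measurable M"
    and sq: "integrable M (\<lambda>\<omega>. (A \<omega>)^2)" "integrable M (\<lambda>\<omega>. (B \<omega>)^2)"
            "integrable M (\<lambda>\<omega>. (C \<omega>)^2)" "integrable M (\<lambda>\<omega>. (D \<omega>)^2)"
    and varB: "var M B > 0" and varD: "var M D > 0"
    and corrBD: "\<bar>corr M B D\<bar> < 1"
    and EA: "expect M A \<noteq> 0" and EC: "expect M C \<noteq> 0"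
    and n: "n \<ge> 1"
    and meas_copies: "\<And>i. i < n \<Longrightarrow> As i \<in> borel_measurable M \<and> Bs i \<in> borel_measurable M
                                 \<and> Cs i \<in> borel_measurable M \<and> Ds i \<in> borel_measurable M"
    and indep: "prob_space.indep_vars M (\<lambda>i. borel \<Otimes>\<^sub>M borel \<Otimes>\<^sub>M borel \<Otimes>\<^sub>M borel)
                  (\<lambda>i \<omega>. (As i \<omega>, Bs i \<omega>, Cs i \<omega>, Ds i \<omega>)) {..<n}"
    and ident: "\<And>i. i < n \<Longrightarrow>
                  distr M (borel \<Otimes>\<^sub>M borel \<Otimes>\<^sub>M borel \<Otimes>\<^sub>M borel) (\<lambda>\<omega>. (As i \<omega>, Bs i \<omega>, Cs i \<omega>, Ds i \<omega>))
                = distr M (borel \<Otimes>\<^sub>M borel \<Otimes>\<^sub>M borel \<Otimes>\<^sub>M borel) (\<lambda>\<omega>. (A \<omega>, B \<omega>, C \<omega>, D \<omega>))"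
  defines "N \<equiv> (\<lambda>\<alpha> \<omega>. smean n As \<omega> + \<alpha> * (expect M B - smean n Bs \<omega>))"
    and "Mb \<equiv> (\<lambda>\<beta> \<omega>. smean n Cs \<omega> + \<beta> * (expect M D - smean n Ds \<omega>))"
    and "\<alpha>\<^sub>o \<equiv> (var M D * cov M A B - (expect M A / expect M C) * var M D * cov M B C
                 + (expect M A / expect M C) * cov M B D * cov M C D - cov M B D * cov M A D)
               / (var M B * var M D - (cov M B D)^2)"
    and "\<beta>\<^sub>o \<equiv> (cov M B D * cov M A B - (expect M A / expect M C) * cov M B D * cov M B C
                 + (expect M A / expect M C) * var M B * cov M C D - var M B * cov M A D)
               / ((expect M A / expect M C) * (var M B * var M D - (cov M B D)^2))"
  shows "{p :: real \<times> real. \<forall>q :: real \<times> real.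
             Phi M (N (fst p)) (Mb (snd p)) \<le> Phi M (N (fst q)) (Mb (snd q))} = {(\<alpha>\<^sub>o, \<beta>\<^sub>o)}
         \<and> Phi M (N \<alpha>\<^sub>o) (Mb \<beta>\<^sub>o) \<le> Phi M (smean n As) (smean n Cs)"
proof -
  note P = assms(1)
  interpret prob_space M by (rule P)
  let ?S = "borel \<Otimes>\<^sub>M borel \<Otimes>\<^sub>M borel \<Otimes>\<^sub>M borel :: (real \<times> real \<times> real \<times> real) measure"
  have sA: "sqint M A" using meas(1) sq(1) unfolding sqint_def by simp
  have sB: "sqint M B" using meas(2) sq(2) unfolding sqint_def by simp
  have sC: "sqint M C" using meas(3) sq(3) unfolding sqint_def by simp
  have sD: "sqint M D" using meas(4) sq(4) unfolding sqint_def by simp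
  define T where "T = (\<lambda>\<omega>. (A \<omega>, B \<omega>, C \<omega>, D \<omega>))"
  define Ts where "Ts = (\<lambda>i \<omega>. (As i \<omega>, Bs i \<omega>, Cs i \<omega>, Ds i \<omega>))"
  have Tm: "T \<in> measurable M ?S"
    unfolding T_def using meas by (auto intro!: measurable_Pair)
  have Tsm: "Ts i \<in> measurable M ?S" if "i < n" for i
    unfolding Ts_def using meas_copies[OF that] by (auto intro!: measurable_Pair)
  have dist: "distr M ?S (Ts i) = distr M ?S T" if "i < n" for i
    unfolding Ts_def T_def using ident[OF that] .
  have ind: "indep_vars (\<lambda>_. ?S) Ts {..<n}"
    unfolding Ts_def using indep .
  have lT: "(\<lambda>\<omega>. lin4 w1 w2 w3 w4 (T \<omega>)) = (\<lambda>\<omega>. lin4 w1 w2 w3 w4 (A \<omega>, B \<omega>, C \<omega>, D \<omega>))" for w1 w2 w3 w4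
    unfolding T_def ..
  have sqT: "sqint M (\<lambda>\<omega>. lin4 w1 w2 w3 w4 (T \<omega>))" for w1 w2 w3 w4
    unfolding lT by (rule lin4_stats(1)[OF P sA sB sC sD])
  note SM = smean_lemma[OF P Tm Tsm dist ind lin4_meas sqT n]
  have ET: "expect M (\<lambda>\<omega>. lin4 w1 w2 w3 w4 (T \<omega>)) =
         w1 * expect M A + w2 * expect M B + w3 * expect M C + w4 * expect M D" for w1 w2 w3 w4
    unfolding lT by (rule lin4_stats(2)[OF P sA sB sC sD])
  have VT: "var M (\<lambda>\<omega>. lin4 w1 w2 w3 w4 (T \<omega>)) =
         w1*w1 * var M A + w2*w2 * var M B + w3*w3 * var M C + w4*w4 * var M D
         + 2*w1*w2 * cov M A B + 2*w1*w3 * cov M A C + 2*w1*w4 * cov M A D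
         + 2*w2*w3 * cov M B C + 2*w2*w4 * cov M B D + 2*w3*w4 * cov M C D" for w1 w2 w3 w4
    unfolding lT by (rule lin4_stats(3)[OF P sA sB sC sD])
  have nz: "real n \<noteq> 0" using n by simp
  have sl: "(\<Sum>i<n. (1/real n) * lin4 w1 w2 w3 w4 (Ts i \<omega>)) =
     w1 * smean n As \<omega> + w2 * smean n Bs \<omega> + w3 * smean n Cs \<omega> + w4 * smean n Ds \<omega>" for w1 w2 w3 w4 \<omega>
  proof -
    have "(\<Sum>i<n. (1/real n) * lin4 w1 w2 w3 w4 (Ts i \<omega>)) = (1/real n) * (\<Sum>i<n. lin4 w1 w2 w3 w4 (Ts i \<omega>))"
      by (simp only: sum_distrib_left)
    also have "(\<Sum>i<n. lin4 w1 w2 w3 w4 (Ts i \<omega>)) =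
        w1 * (\<Sum>i<n. As i \<omega>) + w2 * (\<Sum>i<n. Bs i \<omega>) + w3 * (\<Sum>i<n. Cs i \<omega>) + w4 * (\<Sum>i<n. Ds i \<omega>)"
      unfolding Ts_def lin4_def by (simp add: sum.distrib sum_distrib_left)
    finally show ?thesis unfolding smean_def using nz by (simp add: add_divide_distrib)
  qed
  let ?a = "expect M A" and ?c = "expect M C" and ?R = "expect M A / expect M C"
  have NE: "N \<alpha> = (\<lambda>\<omega>. (\<Sum>i<n. (1/real n) * lin4 1 (-\<alpha>) 0 0 (Ts i \<omega>)) + \<alpha> * expect M B)" for \<alpha>
    unfolding N_def sl by (rule ext) (simp add: algebra_simps)
  have ME: "Mb \<beta> = (\<lambda>\<omega>. (\<Sum>i<n. (1/real n) * lin4 0 0 1 (-\<beta>) (Ts i \<omega>)) + \<beta> * expect M D)" for \<beta>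
    unfolding Mb_def sl by (rule ext) (simp add: algebra_simps)
  have DE: "(\<lambda>\<omega>. N \<alpha> \<omega> - ?R * Mb \<beta> \<omega>) =
     (\<lambda>\<omega>. (\<Sum>i<n. (1/real n) * lin4 1 (-\<alpha>) (-?R) (?R*\<beta>) (Ts i \<omega>)) + (\<alpha> * expect M B - ?R * \<beta> * expect M D))" for \<alpha> \<beta>
    unfolding N_def Mb_def sl by (rule ext) (simp add: algebra_simps)
  have sqN: "sqint M (N \<alpha>)" for \<alpha> unfolding NE by (rule SM(1))
  have sqM: "sqint M (Mb \<beta>)" for \<beta> unfolding ME by (rule SM(1))
  have EN: "expect M (N \<alpha>) = ?a" for \<alpha>
  proof -
    have "expect M (N \<alpha>) = expect M (\<lambda>\<omega>. lin4 1 (-\<alpha>) 0 0 (T \<omega>)) + \<alpha> * expect M B"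
      unfolding NE by (rule SM(2))
    then show ?thesis unfolding ET by simp
  qed
  have EM: "expect M (Mb \<beta>) = ?c" for \<beta>
  proof -
    have "expect M (Mb \<beta>) = expect M (\<lambda>\<omega>. lin4 0 0 1 (-\<beta>) (T \<omega>)) + \<beta> * expect M D"
      unfolding ME by (rule SM(2))
    then show ?thesis unfolding ET by simp
  qed
  define F where "F = (\<lambda>x y. (var M A + x^2 * var M B + ?R^2 * var M C + y^2 * var M D - 2*x*cov M A B - 2*?R*cov M A C + 2*y*cov M A D
                      + 2*x*?R*cov M B C - 2*x*y*cov M B D - 2*?R*y*cov M C D) / (real n * ?c^2))"
  have F_eq: "F x y = (var M A + x^2 * var M B + ?R^2 * var M C + y^2 * var M D - 2*x*cov M A B - 2*?R*cov M A C + 2*y*cov M A D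
                      + 2*x*?R*cov M B C - 2*x*y*cov M B D - 2*?R*y*cov M C D) / (real n * ?c^2)" for x y
    unfolding F_def ..
  have PhiF: "Phi M (N \<alpha>) (Mb \<beta>) = F \<alpha> (?R * \<beta>)" for \<alpha> \<beta>
  proof -
    have v: "var M (\<lambda>\<omega>. N \<alpha> \<omega> - ?R * Mb \<beta> \<omega>) = var M (N \<alpha>) + ?R^2 * var M (Mb \<beta>) - 2 * ?R * cov M (N \<alpha>) (Mb \<beta>)"
      by (rule var2[OF P sqN sqM])
    have v2: "var M (\<lambda>\<omega>. N \<alpha> \<omega> - ?R * Mb \<beta> \<omega>) = var M (\<lambda>\<omega>. lin4 1 (-\<alpha>) (-?R) (?R*\<beta>) (T \<omega>)) / real n"
      unfolding DE by (rule SM(3))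
    have "Phi M (N \<alpha>) (Mb \<beta>) = var M (\<lambda>\<omega>. N \<alpha> \<omega> - ?R * Mb \<beta> \<omega>) / ?c^2"
      unfolding Phi_def EN EM v phi_alg[OF EC] ..
    also have "\<dots> = F \<alpha> (?R * \<beta>)"
      unfolding v2 VT F_eq using EC nz by (simp add: field_simps power2_eq_square)
    finally show ?thesis .
  qed
  have N0: "smean n As = N 0" unfolding N_def by simp
  have M0: "smean n Cs = Mb 0" unfolding Mb_def by simp
  have cs: "(cov M B D)^2 < var M B * var M D"
  proof -
    have pos: "sqrt (var M B * var M D) > 0" using varB varD by simp
    have "\<bar>cov M B D\<bar> / sqrt (var M B * var M D) < 1"
      using corrBD pos unfolding corr_def by (simp add: abs_divide)
    then have "\<bar>cov M B D\<bar> < sqrt (var M B * var M D)" using pos by (simp add: divide_less_eq)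
    then have "\<bar>cov M B D\<bar>^2 < (sqrt (var M B * var M D))^2"
      by (intro power_strict_mono) auto
    then show ?thesis using varB varD by simp
  qed
  have R0: "?R \<noteq> 0" using EA EC by simp
  have K0: "real n * ?c^2 > 0" using n EC by simp
  note main = alg_main[OF varB varD cs R0 K0 F_eq]
  show ?thesis
    unfolding PhiF N0 M0 PhiF \<alpha>\<^sub>o_def \<beta>\<^sub>o_def mult_zero_right
    by (rule main)
qed

end
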